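(* Let $f:\mathbb{R}^d\to\mathbb{R}$ be a two-layer linear network $f(x)=A\frac{1}{\sqrt{k}}Bx$ with $A\in\mathbb{R}^{1\times k}$, $B\in\mathbb{R}^{k\times d}$, where only $B$ is trained. Let $X\in\mathbb{R}^{d\times n}$, $y\in\mathbb{R}^{1\times n}$ be a dataset, and let $B^{(t)}$ be the weights after $t$ steps of gradient descent on the loss $\frac12\|y-A\frac{1}{\sqrt k}BX\|_2^2$ (with respect to $B$, $A=A^{(0)}$ fixed) with constant learning rate $\eta>0$, and $f^{(t)}(x)=A^{(0)}\frac{1}{\sqrt k}B^{(t)}x$. Suppose $\{A^{(0)}_i\}_{i=1}^k$ are i.i.d. random variables with $\mathbb{E}[A_i^2]=1$ and $B^{(0)}=\mathbf{0}$. Then for every $t$, $$\lim_{k\to\infty}{B^{(t)}}^TB^{(t)}=\lim_{k\to\infty}\nabla f^{(t)}\,{\nabla f^{(t)}}^T,$$ where $\nabla f^{(t)}\in\mathbb{R}^d$ is the (constant) gradient of the linear map $f^{(t)}$.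
   Context: The network width $k$ is sent to infinity, with $A^{(0)}$ drawn i.i.d. for each $k$; all quantities $B^{(t)}$, $f^{(t)}$ depend on $k$. *)

theory Defs
  imports "HOL-Probability.Probability"
begin

text \<open>Two-layer linear network of width k: f(x) = A (1/sqrt k) B x, with
 A the first k entries of a sequence (row vector 1 x k), B a k x d matrix
 (rows indexed by i < k, columns by the finite type 'd).\<close>
definition lin_net :: "nat \<Rightarrow> (nat \<Rightarrow> real) \<Rightarrow> (nat \<Rightarrow> 'd::finite \<Rightarrow> real) \<Rightarrow> ('d \<Rightarrow> real) \<Rightarrow> real" where
  "lin_net k A B x = (1 / sqrt (real k)) * (\<Sum>i<k. A i * (\<Sum>j\<in>UNIV. B i j * x j))"

definition sq_loss :: "nat \<Rightarrow> (nat \<Rightarrow> real) \<Rightarrow> ('d::finite \<Rightarrow> 'n::finite \<Rightarrow> real) \<Rightarrow> ('n \<Rightarrow> real)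
    \<Rightarrow> (nat \<Rightarrow> 'd \<Rightarrow> real) \<Rightarrow> real" where
  "sq_loss k A X y B = (1/2) * (\<Sum>m\<in>UNIV. (y m - lin_net k A B (\<lambda>j. X j m))^2)"

definition loss_grad :: "nat \<Rightarrow> (nat \<Rightarrow> real) \<Rightarrow> ('d::finite \<Rightarrow> 'n::finite \<Rightarrow> real) \<Rightarrow> ('n \<Rightarrow> real)
    \<Rightarrow> (nat \<Rightarrow> 'd \<Rightarrow> real) \<Rightarrow> nat \<Rightarrow> 'd \<Rightarrow> real" where
  "loss_grad k A X y B = (\<lambda>i j. deriv (\<lambda>s. sq_loss k A X y (B(i := (B i)(j := s)))) (B i j))"

primrec gd_iter :: "real \<Rightarrow> nat \<Rightarrow> (nat \<Rightarrow> real) \<Rightarrow> ('d::finite \<Rightarrow> 'n::finite \<Rightarrow> real) \<Rightarrow> ('n \<Rightarrow> real)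
    \<Rightarrow> nat \<Rightarrow> (nat \<Rightarrow> 'd \<Rightarrow> real)" where
  "gd_iter \<eta> k A X y 0 = (\<lambda>i j. 0)"
| "gd_iter \<eta> k A X y (Suc t) =
     (\<lambda>i j. gd_iter \<eta> k A X y t i j - \<eta> * loss_grad k A X y (gd_iter \<eta> k A X y t) i j)"

definition gram :: "nat \<Rightarrow> (nat \<Rightarrow> 'd \<Rightarrow> real) \<Rightarrow> 'd \<Rightarrow> 'd \<Rightarrow> real" where
  "gram k B = (\<lambda>j j'. \<Sum>i<k. B i j * B i j')"

text \<open>Gradient of a function R^d -> R at the origin (partial derivatives); for the
 linear map f^(t) this is its constant gradient.\<close>
definition input_grad :: "(('d::finite \<Rightarrow> real) \<Rightarrow> real) \<Rightarrow> 'd \<Rightarrow> real" where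
  "input_grad f = (\<lambda>j. deriv (\<lambda>s. f (\<lambda>j'. if j' = j then s else 0)) 0)"

end

theory Submission
  imports Defs
begin

lemma ennreal_suminf_swap:
  fixes f :: "nat \<Rightarrow> nat \<Rightarrow> ennreal"
  shows "(\<Sum>n. \<Sum>i. f n i) = (\<Sum>i. \<Sum>n. f n i)"
proof -
  have "(\<Sum>n. \<Sum>i. f n i) = (\<Sum>n. \<integral>\<^sup>+i. f n i \<partial>count_space UNIV)"
    by (simp add: nn_integral_count_space_nat)
  also have "\<dots> = (\<integral>\<^sup>+i. (\<Sum>n. f n i) \<partial>count_space UNIV)"
    by (rule nn_integral_suminf[symmetric]) simp
  also have "\<dots> = (\<Sum>i. \<Sum>n. f n i)"
    by (simp add: nn_integral_count_space_nat)
  finally show ?thesis .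
qed

lemma ennreal_sum_lessThan_suminf:
  fixes f :: "nat \<Rightarrow> ennreal"
  shows "(\<Sum>i<K. f i) = (\<Sum>i. if i < K then f i else 0)"
  by (subst suminf_finite[of "{..<K}"]) auto

lemma sq_trunc_sum:
  fixes z :: real
  assumes "0 \<le> z"
  shows "(\<Sum>i. ennreal (if z \<le> real (Suc i) then z^2 / (real (Suc i))^2 else 0)) \<le> ennreal (2 * z)"
proof (cases "z = 0")
  case True
  then show ?thesis by simp
next
  case False
  then have zp: "z > 0" using assms by simp
  define i0 where "i0 = nat \<lceil>z\<rceil> - 1"
  have ci: "real (Suc i0) = of_int \<lceil>z\<rceil>" using zp unfolding i0_def
    by (simp add: of_nat_diff)
  have zi: "z \<le> real (Suc i0)" using ci by simp
  define F where "F i = (if i0 \<le> i then 2*z^2 / real (Suc i) else 2*z^2 / real (Suc i0))" for i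
  define h where "h i = F i - F (Suc i)" for i
  have F0: "F 0 = 2*z^2 / real (Suc i0)" by (simp add: F_def)
  have Flim: "F \<longlonglongrightarrow> 0"
  proof -
    have "(\<lambda>i. 2*z^2 * inverse (real (Suc i))) \<longlonglongrightarrow> 0"
      by (rule tendsto_mult_right_zero[OF LIMSEQ_inverse_real_of_nat])
    then have "(\<lambda>i. 2*z^2 / real (Suc i)) \<longlonglongrightarrow> 0" by (simp add: divide_inverse)
    moreover have "eventually (\<lambda>i. 2*z^2 / real (Suc i) = F i) sequentially"
      using eventually_ge_at_top[of i0] by eventually_elim (simp add: F_def)
    ultimately show ?thesis by (rule Lim_transform_eventually)
  qed
  have hs: "h sums (2*z^2 / real (Suc i0))"
    unfolding h_def using telescope_sums'[OF Flim] F0 by simp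
  have le: "(if z \<le> real (Suc i) then z^2 / (real (Suc i))^2 else 0) \<le> h i" for i
  proof (cases "z \<le> real (Suc i)")
    case True
    then have "i0 \<le> i" using ci by (simp add: i0_def) linarith
    then have "h i = 2*z^2 / real (Suc i) - 2*z^2 / real (Suc (Suc i))" by (simp add: h_def F_def)
    also have "\<dots> = 2*z^2 / (real (Suc i) * real (Suc (Suc i)))" by (simp add: field_simps)
    also have "\<dots> \<ge> z^2 / (real (Suc i))^2"
    proof -
      have n: "Suc i * Suc (Suc i) \<le> 2 * (Suc i)^2" by (simp add: power2_eq_square)
      have r: "real (Suc i) * real (Suc (Suc i)) \<le> 2 * (real (Suc i))^2"
        using n by (metis of_nat_le_iff of_nat_mult of_nat_power of_nat_numeral)
      have "z^2 / (real (Suc i))^2 = 2*z^2 / (2 * (real (Suc i))^2)" by simp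
      also have "\<dots> \<le> 2*z^2 / (real (Suc i) * real (Suc (Suc i)))"
        by (rule divide_left_mono[OF r]) auto
      finally show ?thesis .
    qed
    finally show ?thesis using True by simp
  next
    case False
    have "F (Suc i) \<le> F i" unfolding F_def
      by (cases "i0 \<le> i"; cases "i0 = Suc i") (auto intro!: divide_left_mono)
    then have "h i \<ge> 0" unfolding h_def by simp
    then show ?thesis using False by simp
  qed
  have hnn: "h i \<ge> 0" for i using le[of i] zp by (smt (verit) divide_nonneg_nonneg zero_le_power2)
  have "(\<Sum>i. ennreal (if z \<le> real (Suc i) then z^2 / (real (Suc i))^2 else 0)) \<le> (\<Sum>i. ennreal (h i))"
    by (intro suminf_le ennreal_leI le) auto
  also have "\<dots> = ennreal (2*z^2 / real (Suc i0))"
    using hs hnn by (simp add: suminf_ennreal2 sums_unique[symmetric] sums_summable)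
  also have "\<dots> \<le> ennreal (2*z)"
  proof (intro ennreal_leI)
    have "2*z^2 / real (Suc i0) \<le> 2*z^2 / z" using zi zp by (intro divide_left_mono) auto
    also have "\<dots> = 2*z" using zp by (simp add: power2_eq_square)
    finally show "2*z^2 / real (Suc i0) \<le> 2*z" .
  qed
  finally show ?thesis .
qed

lemma floor_half:
  fixes x :: real
  assumes "1 \<le> x"
  shows "x / 2 \<le> real (nat \<lfloor>x\<rfloor>)"
proof -
  have f1: "\<lfloor>x\<rfloor> \<ge> 1" using assms by simp
  have "real (nat \<lfloor>x\<rfloor>) = of_int \<lfloor>x\<rfloor>" using f1 by simp
  moreover have "x - 1 < of_int \<lfloor>x\<rfloor>" by linarith
  moreover have "(1::real) \<le> of_int \<lfloor>x\<rfloor>" using f1 by simp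
  ultimately show ?thesis by linarith
qed

lemma geom_sub_sum:
  fixes \<alpha> c :: real
  assumes a: "\<alpha> > 1" and c: "c \<ge> 1"
  shows "(\<Sum>n. ennreal (if c \<le> real (nat \<lfloor>\<alpha>^n\<rfloor>) then 1 / (real (nat \<lfloor>\<alpha>^n\<rfloor>))^2 else 0))
          \<le> ennreal (4 / (1 - 1/\<alpha>^2) / c^2)"
proof -
  obtain N where "c < \<alpha>^N" using real_arch_pow[OF a] by blast
  define n0 where "n0 = (LEAST n. c \<le> \<alpha>^n)"
  have cn0: "c \<le> \<alpha>^n0" unfolding n0_def by (rule LeastI[of _ N]) (use \<open>c < \<alpha>^N\<close> in simp)
  have n0le: "n0 \<le> n" if "c \<le> \<alpha>^n" for n unfolding n0_def using that by (rule Least_le)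
  define q where "q = 1 / \<alpha>^2"
  have q: "0 < q" "q < 1" using a by (auto simp: q_def)
  define h where "h n = (if n0 \<le> n then 4 / c^2 * q^(n - n0) else 0)" for n
  have hnn: "h n \<ge> 0" for n using q by (simp add: h_def)
  have le: "(if c \<le> real (nat \<lfloor>\<alpha>^n\<rfloor>) then 1 / (real (nat \<lfloor>\<alpha>^n\<rfloor>))^2 else 0) \<le> h n" for n
  proof (cases "c \<le> real (nat \<lfloor>\<alpha>^n\<rfloor>)")
    case True
    have an1: "1 \<le> \<alpha>^n" using a by simp
    have "real (nat \<lfloor>\<alpha>^n\<rfloor>) \<le> \<alpha>^n" using an1 by simp
    then have cn: "c \<le> \<alpha>^n" using True by simp
    then have nn: "n0 \<le> n" by (rule n0le)
    have kh: "\<alpha>^n / 2 \<le> real (nat \<lfloor>\<alpha>^n\<rfloor>)" using floor_half[OF an1] .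
    define kn where "kn = real (nat \<lfloor>\<alpha>^n\<rfloor>)"
    have kh': "\<alpha>^n / 2 \<le> kn" using kh unfolding kn_def .
    have kpos: "kn > 0" using kh' an1 by linarith
    have "1 / kn^2 \<le> 1 / (\<alpha>^n / 2)^2"
      apply (rule divide_left_mono)
        apply (rule power_mono[OF kh'])
      using an1 kpos a by (auto intro!: mult_pos_pos)
    then have "1 / (real (nat \<lfloor>\<alpha>^n\<rfloor>))^2 \<le> 1 / (\<alpha>^n / 2)^2" unfolding kn_def .
    also have "\<dots> = 4 * q^n" by (simp add: q_def power_divide power_mult_distrib field_simps flip: power_mult)
    also have "q^n = q^n0 * q^(n - n0)" using nn by (simp flip: power_add)
    also have "q^n0 \<le> 1 / c^2"
    proof -
      have "q^n0 = 1 / (\<alpha>^n0)^2" by (simp add: q_def power_divide flip: power_mult) (simp add: power_mult_distrib mult.commute flip: power_mult)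
      also have "\<dots> \<le> 1 / c^2" using cn0 c a by (intro divide_left_mono power_mono) (auto intro!: mult_pos_pos)
      finally show ?thesis .
    qed
    finally have "1 / (real (nat \<lfloor>\<alpha>^n\<rfloor>))^2 \<le> 4 * (1 / c^2 * q^(n - n0))"
      using q by (simp add: mult_right_mono)
    then show ?thesis using True nn by (simp add: h_def)
  next
    case False
    then show ?thesis using hnn by simp
  qed
  have "(\<lambda>n. 4 / c^2 * q^n) sums (4 / c^2 * (1 / (1 - q)))"
    by (rule sums_mult, rule geometric_sums) (use q in simp)
  moreover have "(\<lambda>n. h (n + n0)) = (\<lambda>n. 4 / c^2 * q^n)" by (simp add: h_def fun_eq_iff)
  ultimately have "(\<lambda>n. h (n + n0)) sums (4 / c^2 * (1 / (1 - q)))" by simp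
  moreover have "(\<Sum>i<n0. h i) = 0" by (simp add: h_def)
  ultimately have hs: "h sums (4 / c^2 * (1 / (1 - q)))" using sums_iff_shift[of h n0] by simp
  have "(\<Sum>n. ennreal (if c \<le> real (nat \<lfloor>\<alpha>^n\<rfloor>) then 1 / (real (nat \<lfloor>\<alpha>^n\<rfloor>))^2 else 0)) \<le> (\<Sum>n. ennreal (h n))"
    by (intro suminf_le ennreal_leI le) auto
  also have "\<dots> = ennreal (4 / c^2 * (1 / (1 - q)))"
    using hs hnn by (simp add: suminf_ennreal2 sums_unique[symmetric] sums_summable)
  also have "4 / c^2 * (1 / (1 - q)) = 4 / (1 - 1/\<alpha>^2) / c^2" by (simp add: q_def)
  finally show ?thesis .
qed



lemma sandwich_upper:
  fixes p K p' b sp' x :: real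
  assumes "0 < p" "p \<le> K" "K \<le> p'" "p' \<le> b * p" "0 \<le> x" "x \<le> sp'" "b > 0"
  shows "x / K \<le> (sp'/p') * b"
proof -
  have "x / K \<le> sp' / p" using assms by (intro frac_le) auto
  also have "sp' / p = (sp'/p') * (p' / p)" using assms by (simp add: field_simps)
  also have "p' / p \<le> b" using assms by (simp add: field_simps)
  then have "(sp'/p') * (p' / p) \<le> (sp'/p') * b" using assms by (intro mult_left_mono) auto
  finally show ?thesis .
qed

lemma sandwich_lower:
  fixes p K p' b sp x :: real
  assumes "0 < p" "p \<le> K" "K \<le> p'" "p' \<le> b * p" "0 \<le> sp" "sp \<le> x" "b > 0"
  shows "(sp/p) / b \<le> x / K"
proof -
  have "(sp/p) / b = sp / (b * p)" by simp
  also have "\<dots> \<le> sp / p'" using assms by (intro divide_left_mono) auto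
  also have "\<dots> \<le> x / K" using assms by (intro frac_le) auto
  finally show ?thesis .
qed

lemma floor_half2:
  fixes x :: real
  assumes "1 \<le> x"
  shows "x / 2 \<le> real (nat \<lfloor>x\<rfloor>)"
proof -
  have f1: "\<lfloor>x\<rfloor> \<ge> 1" using assms by simp
  have "real (nat \<lfloor>x\<rfloor>) = of_int \<lfloor>x\<rfloor>" using f1 by simp
  moreover have "x - 1 < of_int \<lfloor>x\<rfloor>" by linarith
  moreover have "(1::real) \<le> of_int \<lfloor>x\<rfloor>" using f1 by simp
  ultimately show ?thesis by linarith
qed

lemma geom_seq_facts:
  fixes a :: real
  assumes a: "a > 1"
  defines "kk \<equiv> \<lambda>n. nat \<lfloor>a^n\<rfloor>"
  shows "\<And>n n'. n \<le> n' \<Longrightarrow> kk n \<le> kk n'"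
    and "\<And>n. kk n \<ge> 1"
    and "\<And>K. \<exists>n. K < kk n"
    and "eventually (\<lambda>n. real (kk (Suc n)) \<le> a^2 * real (kk n)) sequentially"
proof -
  show "kk n \<le> kk n'" if "n \<le> n'" for n n'
    unfolding kk_def using that a by (intro nat_mono floor_mono power_increasing) auto
  show "kk n \<ge> 1" for n
  proof -
    have "1 \<le> a^n" using a by simp
    then have "1 \<le> \<lfloor>a^n\<rfloor>" by simp
    then show ?thesis unfolding kk_def by (simp add: le_nat_iff)
  qed
  show "\<exists>n. K < kk n" for K
  proof -
    obtain n where n: "2 * real K + 2 < a^n" using real_arch_pow[OF a] by blast
    have "1 \<le> a^n" using a by simp
    from floor_half2[OF this] n have "real K < real (kk n)" unfolding kk_def by linarith
    then show ?thesis by auto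
  qed
  obtain N where N: "a / (a - 1) < a^N" using real_arch_pow[OF a] by blast
  show "eventually (\<lambda>n. real (kk (Suc n)) \<le> a^2 * real (kk n)) sequentially"
    unfolding eventually_sequentially
  proof (intro exI allI impI)
    fix n assume "N \<le> n"
    then have "a^N \<le> a^n" using a by (intro power_increasing) auto
    with N have an: "a / (a - 1) \<le> a^n" by simp
    then have an': "a \<le> a^n * (a - 1)" using a by (simp add: field_simps)
    have "real (kk (Suc n)) \<le> a^(Suc n)"
    proof -
      have "1 \<le> a^(Suc n)" using a by (simp del: power_Suc)
      then show ?thesis unfolding kk_def by (simp del: power_Suc)
    qed
    also have "a^(Suc n) \<le> a^2 * (a^n - 1)"
    proof -
      have "a^2 * (a^n - 1) - a^(Suc n) = a * (a^n * (a - 1) - a)"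
        by (simp add: power2_eq_square algebra_simps)
      also have "\<dots> \<ge> 0" using an' a by simp
      finally show ?thesis by simp
    qed
    also have "a^2 * (a^n - 1) \<le> a^2 * real (kk n)"
    proof -
      have "a^n - 1 \<le> real (kk n)"
      proof -
        have "1 \<le> a^n" using a by simp
        then have "real (kk n) = of_int \<lfloor>a^n\<rfloor>" unfolding kk_def by simp
        moreover have "a^n - 1 < of_int \<lfloor>a^n\<rfloor>" by linarith
        ultimately show ?thesis by simp
      qed
      then show ?thesis by (intro mult_left_mono) auto
    qed
    finally show "real (kk (Suc n)) \<le> a^2 * real (kk n)" .
  qed
qed

lemma interp:
  fixes S :: "nat \<Rightarrow> real" and \<alpha> :: "nat \<Rightarrow> real" and \<mu> :: real
  assumes mono: "\<And>a b. a \<le> b \<Longrightarrow> S a \<le> S b" and nn: "\<And>k. 0 \<le> S k"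
    and a1: "\<And>m. \<alpha> m > 1" and alim: "\<alpha> \<longlonglongrightarrow> 1"
    and sub: "\<And>m. (\<lambda>n. S (nat \<lfloor>\<alpha> m ^ n\<rfloor>) / real (nat \<lfloor>\<alpha> m ^ n\<rfloor>)) \<longlonglongrightarrow> \<mu>"
  shows "(\<lambda>k. S k / real k) \<longlonglongrightarrow> \<mu>"
  unfolding LIMSEQ_iff
proof (intro allI impI)
  fix \<epsilon> :: real assume ep: "\<epsilon> > 0"
  have a2: "(\<lambda>m. (\<alpha> m)^2) \<longlonglongrightarrow> 1" using tendsto_power[OF alim, of 2] by simp
  have "(\<lambda>m. (\<mu> + \<epsilon>/2) * (\<alpha> m)^2) \<longlonglongrightarrow> \<mu> + \<epsilon>/2"
    using tendsto_mult[OF tendsto_const a2] by simp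
  then have ev1: "eventually (\<lambda>m. (\<mu> + \<epsilon>/2) * (\<alpha> m)^2 < \<mu> + \<epsilon>) sequentially"
    using ep by (intro order_tendstoD(2)) auto
  have "(\<lambda>m. (\<mu> - \<epsilon>) * (\<alpha> m)^2) \<longlonglongrightarrow> \<mu> - \<epsilon>"
    using tendsto_mult[OF tendsto_const a2] by simp
  then have ev2: "eventually (\<lambda>m. (\<mu> - \<epsilon>) * (\<alpha> m)^2 < \<mu> - \<epsilon>/2) sequentially"
    using ep by (intro order_tendstoD(2)) auto
  obtain m where m1: "(\<mu> + \<epsilon>/2) * (\<alpha> m)^2 < \<mu> + \<epsilon>" and m2: "(\<mu> - \<epsilon>) * (\<alpha> m)^2 < \<mu> - \<epsilon>/2"
    using eventually_conj[OF ev1 ev2] unfolding eventually_sequentially by auto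
  define a where "a = \<alpha> m"
  have a: "a > 1" using a1 by (simp add: a_def)
  define kk where "kk n = nat \<lfloor>a^n\<rfloor>" for n
  note F = geom_seq_facts[OF a, folded kk_def]
  have kkpos: "real (kk n) > 0" for n using F(2)[of n] by simp
  define r where "r n = S (kk n) / real (kk n)" for n
  have rnn: "r n \<ge> 0" for n unfolding r_def using nn kkpos[of n] by simp
  have "r \<longlonglongrightarrow> \<mu>" using sub[of m] unfolding r_def kk_def a_def .
  then have evr: "eventually (\<lambda>n. \<bar>r n - \<mu>\<bar> < \<epsilon>/2) sequentially"
  proof -
    have "\<epsilon>/2 > 0" using ep by simp
    then obtain no where "\<forall>n\<ge>no. norm (r n - \<mu>) < \<epsilon>/2" using \<open>r \<longlonglongrightarrow> \<mu>\<close> unfolding LIMSEQ_iff by blast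
    then show ?thesis unfolding eventually_sequentially by auto
  qed
  obtain N where N: "\<And>n. n \<ge> N \<Longrightarrow> \<bar>r n - \<mu>\<bar> < \<epsilon>/2 \<and> real (kk (Suc n)) \<le> a^2 * real (kk n)"
    using eventually_conj[OF evr F(4)] unfolding eventually_sequentially by auto
  show "\<exists>no. \<forall>K\<ge>no. norm (S K / real K - \<mu>) < \<epsilon>"
  proof (intro exI allI impI)
    fix K assume K: "K \<ge> kk (Suc N)"
    have K1: "K \<ge> 1" using K F(2)[of "Suc N"] by simp
    define n' where "n' = (LEAST n'. K < kk n')"
    have Kn': "K < kk n'" unfolding n'_def using F(3)[of K] by (metis LeastI)
    have n'0: "n' \<noteq> 0"
    proof
      assume "n' = 0"
      then show False using Kn' K1 by (simp add: kk_def)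
    qed
    define n where "n = n' - 1"
    have sn: "Suc n = n'" using n'0 by (simp add: n_def)
    have kn: "kk n \<le> K" using not_less_Least[of n "\<lambda>n'. K < kk n'"] sn unfolding n'_def[symmetric] by auto
    have kn1: "K \<le> kk (Suc n)" using Kn' sn by simp
    have nN: "n \<ge> N"
    proof (rule ccontr)
      assume "\<not> N \<le> n"
      then have "Suc n \<le> N" by simp
      then have "kk (Suc n) \<le> kk N" by (rule F(1))
      also have "\<dots> \<le> kk (Suc N)" by (rule F(1)) simp
      finally show False using K Kn' sn by simp
    qed
    have ratio: "real (kk (Suc n)) \<le> a^2 * real (kk n)" using N[OF nN] by simp
    have rn: "\<bar>r n - \<mu>\<bar> < \<epsilon>/2" using N[OF nN] by simp
    have rsn: "\<bar>r (Suc n) - \<mu>\<bar> < \<epsilon>/2" using N[of "Suc n"] nN by simp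
    have a2p: "a^2 > 0" using a by simp
    have up: "S K / real K \<le> r (Suc n) * a^2"
      unfolding r_def
      by (rule sandwich_upper) (use kkpos[of n] kn kn1 ratio nn mono a2p in auto)
    have lo: "r n / a^2 \<le> S K / real K"
      unfolding r_def
      by (rule sandwich_lower) (use kkpos[of n] kn kn1 ratio nn mono a2p in auto)
    have r1: "r (Suc n) < \<mu> + \<epsilon>/2" using rsn unfolding abs_less_iff by linarith
    have r2: "\<mu> - \<epsilon>/2 < r n" using rn unfolding abs_less_iff by linarith
    have "r (Suc n) * a^2 \<le> (\<mu> + \<epsilon>/2) * a^2" using r1 a2p by (intro mult_right_mono) auto
    then have U: "S K / real K < \<mu> + \<epsilon>" using up m1 unfolding a_def by simp
    have "(\<mu> - \<epsilon>/2) / a^2 \<le> r n / a^2" using r2 a2p by (intro divide_right_mono) auto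
    moreover have "\<mu> - \<epsilon> < (\<mu> - \<epsilon>/2) / a^2" using m2 a2p unfolding a_def by (simp add: field_simps)
    ultimately have L: "\<mu> - \<epsilon> < S K / real K" using lo by simp
    show "norm (S K / real K - \<mu>) < \<epsilon>" using U L by (simp add: abs_less_iff)
  qed
qed



lemma cesaro:
  fixes a :: "nat \<Rightarrow> real"
  assumes "a \<longlonglongrightarrow> L"
  shows "(\<lambda>n. (\<Sum>i<n. a i) / real n) \<longlonglongrightarrow> L"
  unfolding LIMSEQ_iff
proof (intro allI impI)
  fix \<epsilon> :: real assume ep: "\<epsilon> > 0"
  obtain N where N: "\<And>i. i \<ge> N \<Longrightarrow> \<bar>a i - L\<bar> < \<epsilon>/2"
    using assms ep unfolding LIMSEQ_iff by (metis half_gt_zero real_norm_def)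
  define B where "B = (\<Sum>i<N. \<bar>a i - L\<bar>)"
  have B0: "B \<ge> 0" unfolding B_def by (intro sum_nonneg) auto
  obtain N2 :: nat where N2: "2 * B / \<epsilon> < real N2" using reals_Archimedean2 by blast
  show "\<exists>no. \<forall>n\<ge>no. norm ((\<Sum>i<n. a i) / real n - L) < \<epsilon>"
  proof (intro exI allI impI)
    fix n assume n: "n \<ge> max (Suc N) N2"
    then have npos: "real n > 0" by simp
    have "(\<Sum>i<n. a i) / real n - L = (\<Sum>i<n. a i - L) / real n"
      using npos by (simp add: sum_subtractf field_simps)
    moreover have "\<bar>\<Sum>i<n. a i - L\<bar> \<le> B + real n * (\<epsilon>/2)"
    proof -
      have split: "{..<n} = {..<N} \<union> {N..<n}" using n by auto
      have "\<bar>\<Sum>i<n. a i - L\<bar> \<le> (\<Sum>i<n. \<bar>a i - L\<bar>)" by (rule sum_abs)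
      also have "\<dots> = B + (\<Sum>i\<in>{N..<n}. \<bar>a i - L\<bar>)"
        unfolding B_def split by (subst sum.union_disjoint) auto
      also have "(\<Sum>i\<in>{N..<n}. \<bar>a i - L\<bar>) \<le> (\<Sum>i\<in>{N..<n}. \<epsilon>/2)"
      proof (rule sum_mono)
        fix i assume "i \<in> {N..<n}"
        then show "\<bar>a i - L\<bar> \<le> \<epsilon>/2" using N[of i] by simp
      qed
      also have "\<dots> \<le> real n * (\<epsilon>/2)" using ep by simp
      finally show ?thesis by simp
    qed
    moreover have "B < real n * (\<epsilon>/2)"
    proof -
      have "2 * B / \<epsilon> < real n" using N2 n by linarith
      then show ?thesis using ep by (simp add: field_simps)
    qed
    ultimately have "\<bar>\<Sum>i<n. a i - L\<bar> < \<epsilon> * real n" "(\<Sum>i<n. a i) / real n - L = (\<Sum>i<n. a i - L) / real n"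
      by (simp_all add: algebra_simps)
    then have "\<bar>(\<Sum>i<n. a i) / real n - L\<bar> < \<epsilon>"
      using npos by (simp add: abs_divide divide_less_eq)
    then show "norm ((\<Sum>i<n. a i) / real n - L) < \<epsilon>" by simp
  qed
qed

context prob_space
begin

lemma transfer_nn:
  assumes "X \<in> borel_measurable M" "Y \<in> borel_measurable M" "distr M borel X = distr M borel Y"
    and "g \<in> borel_measurable borel"
  shows "(\<integral>\<^sup>+\<omega>. g (X \<omega>) \<partial>M) = (\<integral>\<^sup>+\<omega>. g (Y \<omega>) \<partial>M)"
proof -
  have "(\<integral>\<^sup>+\<omega>. g (X \<omega>) \<partial>M) = integral\<^sup>N (distr M borel X) g"
    by (rule nn_integral_distr[symmetric]) (use assms in auto)
  also have "\<dots> = integral\<^sup>N (distr M borel Y) g" by (simp only: assms(3))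
  also have "\<dots> = (\<integral>\<^sup>+\<omega>. g (Y \<omega>) \<partial>M)" by (rule nn_integral_distr) (use assms in auto)
  finally show ?thesis .
qed

lemma transfer_L:
  fixes g :: "real \<Rightarrow> real"
  assumes "X \<in> borel_measurable M" "Y \<in> borel_measurable M" "distr M borel X = distr M borel Y"
    and "g \<in> borel_measurable borel"
  shows "(\<integral>\<omega>. g (X \<omega>) \<partial>M) = (\<integral>\<omega>. g (Y \<omega>) \<partial>M)"
proof -
  have "(\<integral>\<omega>. g (X \<omega>) \<partial>M) = integral\<^sup>L (distr M borel X) g"
    by (rule integral_distr[symmetric]) (use assms in auto)
  also have "\<dots> = integral\<^sup>L (distr M borel Y) g" by (simp only: assms(3))
  also have "\<dots> = (\<integral>\<omega>. g (Y \<omega>) \<partial>M)" by (rule integral_distr) (use assms in auto)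
  finally show ?thesis .
qed

lemma count_le:
  fixes z :: real
  assumes "0 \<le> z"
  shows "(\<Sum>i. ennreal (if real (Suc i) < z then 1 else 0)) \<le> ennreal z"
proof -
  have "(\<Sum>i. ennreal (if real (Suc i) < z then 1 else 0)) = (\<Sum>i<nat \<lfloor>z\<rfloor>. ennreal (if real (Suc i) < z then 1 else 0))"
  proof (rule suminf_finite)
    fix i assume "i \<notin> {..<nat \<lfloor>z\<rfloor>}"
    then have "nat \<lfloor>z\<rfloor> \<le> i" by simp
    then have "\<lfloor>z\<rfloor> \<le> int i" by linarith
    then have "z < real (Suc i)" by linarith
    then show "ennreal (if real (Suc i) < z then 1 else 0) = 0" by simp
  qed simp
  also have "\<dots> \<le> (\<Sum>i<nat \<lfloor>z\<rfloor>. 1)" by (intro sum_mono) auto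
  also have "\<dots> = ennreal (real (nat \<lfloor>z\<rfloor>))" by (simp add: ennreal_of_nat_eq_real_of_nat)
  also have "\<dots> \<le> ennreal z" using assms by (intro ennreal_leI) linarith
  finally show ?thesis .
qed

lemma rv_of_indep:
  assumes "indep_vars (\<lambda>_. borel) Z UNIV"
  shows "Z i \<in> borel_measurable M"
  using assms unfolding indep_vars_def2 by auto

lemma trunc_ae:
  fixes Z :: "nat \<Rightarrow> 'a \<Rightarrow> real"
  assumes meas: "\<And>i. Z i \<in> borel_measurable M"
    and dist: "\<And>i. distr M borel (Z i) = distr M borel (Z 0)"
    and nn: "\<And>i \<omega>. 0 \<le> Z i \<omega>" and int: "integrable M (Z 0)"
  shows "AE \<omega> in M. eventually (\<lambda>i. Z i \<omega> \<le> real (Suc i)) sequentially"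
proof -
  define f where "f i \<omega> = ennreal (if real (Suc i) < Z i \<omega> then 1 else 0)" for i \<omega>
  have fm: "f i \<in> borel_measurable M" for i unfolding f_def using meas[of i] by measurable
  have "(\<integral>\<^sup>+\<omega>. (\<Sum>i. f i \<omega>) \<partial>M) = (\<Sum>i. \<integral>\<^sup>+\<omega>. f i \<omega> \<partial>M)"
    by (rule nn_integral_suminf[OF fm])
  also have "\<dots> = (\<Sum>i. \<integral>\<^sup>+\<omega>. ennreal (if real (Suc i) < Z 0 \<omega> then 1 else 0) \<partial>M)"
    unfolding f_def
    by (intro suminf_cong transfer_nn[where g="\<lambda>z. ennreal (if real (Suc _) < z then 1 else 0)"] meas dist) measurable
  also have "\<dots> = (\<integral>\<^sup>+\<omega>. (\<Sum>i. ennreal (if real (Suc i) < Z 0 \<omega> then 1 else 0)) \<partial>M)"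
    by (rule nn_integral_suminf[symmetric]) (use meas[of 0] in measurable)
  also have "\<dots> \<le> (\<integral>\<^sup>+\<omega>. ennreal (Z 0 \<omega>) \<partial>M)"
    by (intro nn_integral_mono count_le nn)
  also have "\<dots> < \<infinity>"
    using int by (simp add: integrable_iff_bounded nn)
  finally have fin: "(\<integral>\<^sup>+\<omega>. (\<Sum>i. f i \<omega>) \<partial>M) \<noteq> \<infinity>" by simp
  have "AE \<omega> in M. (\<Sum>i. f i \<omega>) \<noteq> \<infinity>"
    by (rule nn_integral_PInf_AE[OF _ fin]) (use fm in measurable)
  then show ?thesis
  proof (rule AE_mp, intro AE_I2 impI)
    fix \<omega> assume "(\<Sum>i. f i \<omega>) \<noteq> \<infinity>"
    then have "summable (\<lambda>i. if real (Suc i) < Z i \<omega> then 1 else 0::real)"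
      unfolding f_def by (intro summable_suminf_not_top) auto
    then have "(\<lambda>i. if real (Suc i) < Z i \<omega> then 1 else 0::real) \<longlonglongrightarrow> 0"
      by (rule summable_LIMSEQ_zero)
    then have "eventually (\<lambda>i. (if real (Suc i) < Z i \<omega> then 1 else 0::real) < 1) sequentially"
      by (intro order_tendstoD(2)) auto
    then show "eventually (\<lambda>i. Z i \<omega> \<le> real (Suc i)) sequentially"
      by eventually_elim (auto split: if_splits)
  qed
qed

end


context prob_space
begin

lemma subseq_conv:
  fixes Z :: "nat \<Rightarrow> 'a \<Rightarrow> real" and \<alpha> :: real
  assumes ind: "indep_vars (\<lambda>_. borel) Z UNIV"
    and dist: "\<And>i. distr M borel (Z i) = distr M borel (Z 0)"
    and nn: "\<And>i \<omega>. 0 \<le> Z i \<omega>" and int: "integrable M (Z 0)"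
    and a: "\<alpha> > 1"
  shows "AE \<omega> in M. (\<lambda>n. (\<Sum>i<nat \<lfloor>\<alpha>^n\<rfloor>. Z i \<omega>) / real (nat \<lfloor>\<alpha>^n\<rfloor>)) \<longlonglongrightarrow> expectation (Z 0)"
proof -
  have meas[measurable]: "Z i \<in> borel_measurable M" for i by (rule rv_of_indep[OF ind])
  define g where "g i z = (if z \<le> real (Suc i) then z else 0)" for i and z :: real
  have gm[measurable]: "g i \<in> borel_measurable borel" for i unfolding g_def by measurable
  have gb: "\<bar>g i (Z j \<omega>)\<bar> \<le> real (Suc i)" for i j \<omega> unfolding g_def using nn[of j \<omega>] by auto
  have gnn: "0 \<le> g i (Z j \<omega>)" for i j \<omega> unfolding g_def using nn[of j \<omega>] by auto
  define mu where "mu i = expectation (\<lambda>\<omega>. g i (Z 0 \<omega>))" for i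
  define D where "D i \<omega> = g i (Z i \<omega>) - mu i" for i \<omega>
  define v where "v i = expectation (\<lambda>\<omega>. (g i (Z 0 \<omega>))^2)" for i
  have Dm[measurable]: "D i \<in> borel_measurable M" for i unfolding D_def by measurable
  have intY: "integrable M (\<lambda>\<omega>. g i (Z j \<omega>))" for i j
    by (rule integrable_const_bound[where B="real (Suc i)"]) (use gb in auto)
  have intY2: "integrable M (\<lambda>\<omega>. (g i (Z j \<omega>))^2)" for i j
  proof (rule integrable_const_bound[where B="(real (Suc i))^2"])
    show "AE x in M. norm ((g i (Z j x))^2) \<le> (real (Suc i))^2"
    proof (intro AE_I2)
      fix x
      have "\<bar>g i (Z j x)\<bar>^2 \<le> (real (Suc i))^2" by (rule power_mono[OF gb]) simp
      then show "norm ((g i (Z j x))^2) \<le> (real (Suc i))^2" by simp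
    qed
  qed measurable
  have EY: "expectation (\<lambda>\<omega>. g i (Z i \<omega>)) = mu i" for i
    unfolding mu_def by (rule transfer_L[OF meas meas dist gm])
  have EY2: "expectation (\<lambda>\<omega>. (g i (Z i \<omega>))^2) = v i" for i
    unfolding v_def by (rule transfer_L[OF meas meas dist]) measurable
  have Db: "\<bar>D i \<omega>\<bar> \<le> real (Suc i) + \<bar>mu i\<bar>" for i \<omega>
    unfolding D_def using gb[of i i \<omega>] by linarith
  have intD: "integrable M (D i)" for i
    by (rule integrable_const_bound[where B="real (Suc i) + \<bar>mu i\<bar>"]) (use Db in auto)
  have intDD: "integrable M (\<lambda>\<omega>. D i \<omega> * D j \<omega>)" for i j
  proof (rule integrable_const_bound[where B="(real (Suc i) + \<bar>mu i\<bar>) * (real (Suc j) + \<bar>mu j\<bar>)"])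
    show "AE x in M. norm (D i x * D j x) \<le> (real (Suc i) + \<bar>mu i\<bar>) * (real (Suc j) + \<bar>mu j\<bar>)"
      using Db by (auto simp: abs_mult intro!: mult_mono)
  qed measurable
  have indD: "indep_vars (\<lambda>_. borel) D UNIV"
    using indep_vars_compose2[OF ind, of "\<lambda>i z. g i z - mu i" "\<lambda>_. borel"] unfolding D_def[abs_def]
    by simp
  have pair: "indep_var borel (D i) borel (D j)" if "i \<noteq> j" for i j
  proof -
    have "indep_vars (\<lambda>_. borel) D (insert i {j})" by (rule indep_vars_subset[OF indD]) auto
    from indep_vars_sum[OF _ _ this] that show ?thesis by simp
  qed
  have ED: "expectation (D i) = 0" for i
    unfolding D_def using intY[of i i] by (simp add: EY prob_space)
  have EDD: "expectation (\<lambda>\<omega>. D i \<omega> * D j \<omega>) = (if i = j then expectation (\<lambda>\<omega>. (D i \<omega>)^2) else 0)" for i j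
  proof (cases "i = j")
    case True then show ?thesis by (simp add: power2_eq_square)
  next
    case False
    then show ?thesis using indep_var_lebesgue_integral[OF pair[OF False] intD intD] ED by simp
  qed
  have EDsq: "expectation (\<lambda>\<omega>. (D i \<omega>)^2) \<le> v i" for i
  proof -
    have "expectation (\<lambda>\<omega>. (g i (Z i \<omega>) - expectation (\<lambda>\<omega>. g i (Z i \<omega>)))^2)
        = expectation (\<lambda>\<omega>. (g i (Z i \<omega>))^2) - (expectation (\<lambda>\<omega>. g i (Z i \<omega>)))^2"
      by (rule variance_eq[OF intY intY2])
    then have "expectation (\<lambda>\<omega>. (D i \<omega>)^2) = v i - (mu i)^2"
      unfolding D_def EY EY2 .
    then show ?thesis by simp
  qed
  have vnn: "v i \<ge> 0" for i unfolding v_def by (intro integral_nonneg_AE AE_I2) simp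
  have Esum: "expectation (\<lambda>\<omega>. (\<Sum>i<K. D i \<omega>)^2) = (\<Sum>i<K. expectation (\<lambda>\<omega>. (D i \<omega>)^2))" for K
  proof -
    have "(\<lambda>\<omega>. (\<Sum>i<K. D i \<omega>)^2) = (\<lambda>\<omega>. \<Sum>i<K. \<Sum>j<K. D i \<omega> * D j \<omega>)"
      by (simp add: power2_eq_square sum_product)
    then have "expectation (\<lambda>\<omega>. (\<Sum>i<K. D i \<omega>)^2) = (\<Sum>i<K. \<Sum>j<K. expectation (\<lambda>\<omega>. D i \<omega> * D j \<omega>))"
      by (simp add: intDD integrable_sum)
    also have "\<dots> = (\<Sum>i<K. expectation (\<lambda>\<omega>. (D i \<omega>)^2))"
      unfolding EDD by (simp add: sum.delta)
    finally show ?thesis .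
  qed
  have intS2: "integrable M (\<lambda>\<omega>. (\<Sum>i<K. D i \<omega>)^2)" for K
  proof -
    have "(\<lambda>\<omega>. (\<Sum>i<K. D i \<omega>)^2) = (\<lambda>\<omega>. \<Sum>i<K. \<Sum>j<K. D i \<omega> * D j \<omega>)"
      by (simp add: power2_eq_square sum_product)
    then show ?thesis by (simp add: intDD integrable_sum)
  qed
  have nnK: "(\<integral>\<^sup>+\<omega>. ennreal (((\<Sum>i<K. D i \<omega>) / real K)^2) \<partial>M) \<le> ennreal ((\<Sum>i<K. v i) / (real K)^2)" for K
  proof -
    have "(\<integral>\<^sup>+\<omega>. ennreal (((\<Sum>i<K. D i \<omega>) / real K)^2) \<partial>M) = ennreal (expectation (\<lambda>\<omega>. ((\<Sum>i<K. D i \<omega>) / real K)^2))"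
      by (rule nn_integral_eq_integral) (use intS2[of K] in \<open>auto simp: power_divide\<close>)
    have "expectation (\<lambda>\<omega>. ((\<Sum>i<K. D i \<omega>) / real K)^2) = expectation (\<lambda>\<omega>. (\<Sum>i<K. D i \<omega>)^2) / (real K)^2"
      by (simp add: power_divide)
    also have "\<dots> \<le> (\<Sum>i<K. v i) / (real K)^2"
      unfolding Esum by (intro divide_right_mono sum_mono EDsq) auto
    finally have "expectation (\<lambda>\<omega>. ((\<Sum>i<K. D i \<omega>) / real K)^2) \<le> (\<Sum>i<K. v i) / (real K)^2" .
    then have "ennreal (expectation (\<lambda>\<omega>. ((\<Sum>i<K. D i \<omega>) / real K)^2)) \<le> ennreal ((\<Sum>i<K. v i) / (real K)^2)"
      by (rule ennreal_leI)
    then show ?thesis using \<open>(\<integral>\<^sup>+\<omega>. ennreal (((\<Sum>i<K. D i \<omega>) / real K)^2) \<partial>M) = _\<close> by simp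
  qed
  define kk where "kk n = nat \<lfloor>\<alpha>^n\<rfloor>" for n
  define C where "C = 4 / (1 - 1/\<alpha>^2)"
  have Cnn: "C \<ge> 0"
  proof -
    have "1/\<alpha>^2 < 1" using a by (simp add: power_less_one_iff)
    then show ?thesis unfolding C_def by simp
  qed
  have term_eq: "ennreal ((\<Sum>i<K. v i) / (real K)^2) = (\<Sum>i. ennreal (v i) * ennreal (if real (Suc i) \<le> real K then 1 / (real K)^2 else 0))" for K
  proof -
    have "(\<Sum>i. ennreal (v i) * ennreal (if real (Suc i) \<le> real K then 1 / (real K)^2 else 0)) = (\<Sum>i. if i < K then ennreal (v i / (real K)^2) else 0)"
      by (intro suminf_cong) (auto simp: ennreal_mult''[symmetric])
    also have "\<dots> = (\<Sum>i<K. ennreal (v i / (real K)^2))" by (rule ennreal_sum_lessThan_suminf[symmetric])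
    also have "\<dots> = ennreal (\<Sum>i<K. v i / (real K)^2)" using vnn by simp
    also have "\<dots> = ennreal ((\<Sum>i<K. v i) / (real K)^2)" by (simp add: sum_divide_distrib)
    finally show ?thesis ..
  qed
  have geo: "(\<Sum>n. ennreal (if real (Suc i) \<le> real (kk n) then 1 / (real (kk n))^2 else 0)) \<le> ennreal (C / (real (Suc i))^2)" for i
    unfolding kk_def C_def by (rule geom_sub_sum[OF a]) simp
  have vint: "ennreal (v i) = (\<integral>\<^sup>+\<omega>. ennreal ((g i (Z 0 \<omega>))^2) \<partial>M)" for i
    unfolding v_def by (rule nn_integral_eq_integral[symmetric]) (auto simp: intY2)
  have ptw: "ennreal ((g i z)^2) * ennreal (C / (real (Suc i))^2) = ennreal C * ennreal (if z \<le> real (Suc i) then z^2 / (real (Suc i))^2 else 0)" for i z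
  proof (cases "z \<le> real (Suc i)")
    case True
    have e1: "ennreal (z^2 * (C / (real (Suc i))^2)) = ennreal (z^2) * ennreal (C / (real (Suc i))^2)"
      by (rule ennreal_mult') simp
    have "ennreal ((g i z)^2) * ennreal (C / (real (Suc i))^2) = ennreal (z^2 * (C / (real (Suc i))^2))"
      unfolding e1 using True by (simp add: g_def)
    also have "\<dots> = ennreal (C * (z^2 / (real (Suc i))^2))" by (simp add: field_simps)
    also have "\<dots> = ennreal C * ennreal (z^2 / (real (Suc i))^2)" using Cnn by (rule ennreal_mult')
    finally show ?thesis using True by simp
  next
    case False
    then show ?thesis by (simp add: g_def)
  qed
  have int2: "(\<integral>\<^sup>+\<omega>. ennreal (2 * Z 0 \<omega>) \<partial>M) < \<infinity>"
  proof -
    have "(\<integral>\<^sup>+\<omega>. ennreal (2 * Z 0 \<omega>) \<partial>M) = ennreal (expectation (\<lambda>\<omega>. 2 * Z 0 \<omega>))"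
      by (rule nn_integral_eq_integral) (use int nn in auto)
    then show ?thesis by simp
  qed
  have bound: "(\<Sum>n. \<integral>\<^sup>+\<omega>. ennreal (((\<Sum>i<kk n. D i \<omega>) / real (kk n))^2) \<partial>M) < \<infinity>"
  proof -
    have "(\<Sum>n. \<integral>\<^sup>+\<omega>. ennreal (((\<Sum>i<kk n. D i \<omega>) / real (kk n))^2) \<partial>M) \<le> (\<Sum>n. ennreal ((\<Sum>i<kk n. v i) / (real (kk n))^2))"
      by (intro suminf_le nnK) auto
    also have "\<dots> = (\<Sum>n. \<Sum>i. ennreal (v i) * ennreal (if real (Suc i) \<le> real (kk n) then 1 / (real (kk n))^2 else 0))"
      by (simp only: term_eq)
    also have "\<dots> = (\<Sum>i. \<Sum>n. ennreal (v i) * ennreal (if real (Suc i) \<le> real (kk n) then 1 / (real (kk n))^2 else 0))"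
      by (rule ennreal_suminf_swap)
    also have "\<dots> = (\<Sum>i. ennreal (v i) * (\<Sum>n. ennreal (if real (Suc i) \<le> real (kk n) then 1 / (real (kk n))^2 else 0)))"
      by simp
    also have "\<dots> \<le> (\<Sum>i. ennreal (v i) * ennreal (C / (real (Suc i))^2))"
      by (intro suminf_le mult_left_mono geo) auto
    also have "\<dots> = (\<Sum>i. \<integral>\<^sup>+\<omega>. ennreal C * ennreal (if Z 0 \<omega> \<le> real (Suc i) then (Z 0 \<omega>)^2 / (real (Suc i))^2 else 0) \<partial>M)"
    proof (intro suminf_cong)
      fix i
      have "ennreal (v i) * ennreal (C / (real (Suc i))^2) = (\<integral>\<^sup>+\<omega>. ennreal ((g i (Z 0 \<omega>))^2) * ennreal (C / (real (Suc i))^2) \<partial>M)"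
        unfolding vint by (rule nn_integral_multc[symmetric]) measurable
      also have "\<dots> = (\<integral>\<^sup>+\<omega>. ennreal C * ennreal (if Z 0 \<omega> \<le> real (Suc i) then (Z 0 \<omega>)^2 / (real (Suc i))^2 else 0) \<partial>M)"
        by (simp only: ptw)
      finally show "ennreal (v i) * ennreal (C / (real (Suc i))^2) = (\<integral>\<^sup>+\<omega>. ennreal C * ennreal (if Z 0 \<omega> \<le> real (Suc i) then (Z 0 \<omega>)^2 / (real (Suc i))^2 else 0) \<partial>M)" .
    qed
    also have "\<dots> = (\<integral>\<^sup>+\<omega>. (\<Sum>i. ennreal C * ennreal (if Z 0 \<omega> \<le> real (Suc i) then (Z 0 \<omega>)^2 / (real (Suc i))^2 else 0)) \<partial>M)"
      by (rule nn_integral_suminf[symmetric]) measurable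
    also have "\<dots> = (\<integral>\<^sup>+\<omega>. ennreal C * (\<Sum>i. ennreal (if Z 0 \<omega> \<le> real (Suc i) then (Z 0 \<omega>)^2 / (real (Suc i))^2 else 0)) \<partial>M)"
      by simp
    also have "\<dots> \<le> (\<integral>\<^sup>+\<omega>. ennreal C * ennreal (2 * Z 0 \<omega>) \<partial>M)"
      by (intro nn_integral_mono mult_left_mono sq_trunc_sum nn) auto
    also have "\<dots> = ennreal C * (\<integral>\<^sup>+\<omega>. ennreal (2 * Z 0 \<omega>) \<partial>M)"
      by (rule nn_integral_cmult) measurable
    also have "\<dots> < \<infinity>" using int2 by (simp add: ennreal_mult_less_top)
    finally show ?thesis .
  qed
  have "AE \<omega> in M. (\<Sum>n. ennreal (((\<Sum>i<kk n. D i \<omega>) / real (kk n))^2)) \<noteq> \<infinity>"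
  proof (rule nn_integral_PInf_AE)
    show "(\<lambda>\<omega>. \<Sum>n. ennreal (((\<Sum>i<kk n. D i \<omega>) / real (kk n))^2)) \<in> borel_measurable M" by measurable
    have "(\<integral>\<^sup>+\<omega>. (\<Sum>n. ennreal (((\<Sum>i<kk n. D i \<omega>) / real (kk n))^2)) \<partial>M) = (\<Sum>n. \<integral>\<^sup>+\<omega>. ennreal (((\<Sum>i<kk n. D i \<omega>) / real (kk n))^2) \<partial>M)"
      by (rule nn_integral_suminf) measurable
    then show "(\<integral>\<^sup>+\<omega>. (\<Sum>n. ennreal (((\<Sum>i<kk n. D i \<omega>) / real (kk n))^2)) \<partial>M) \<noteq> \<infinity>"
      using bound by simp
  qed
  then have AE1: "AE \<omega> in M. (\<lambda>n. (\<Sum>i<kk n. D i \<omega>) / real (kk n)) \<longlonglongrightarrow> 0"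
  proof (rule AE_mp, intro AE_I2 impI)
    fix \<omega> assume "(\<Sum>n. ennreal (((\<Sum>i<kk n. D i \<omega>) / real (kk n))^2)) \<noteq> \<infinity>"
    then have "summable (\<lambda>n. ((\<Sum>i<kk n. D i \<omega>) / real (kk n))^2)"
      by (intro summable_suminf_not_top) auto
    then have "(\<lambda>n. ((\<Sum>i<kk n. D i \<omega>) / real (kk n))^2) \<longlonglongrightarrow> 0"
      by (rule summable_LIMSEQ_zero)
    then have "(\<lambda>n. sqrt (((\<Sum>i<kk n. D i \<omega>) / real (kk n))^2)) \<longlonglongrightarrow> sqrt 0"
      by (rule tendsto_real_sqrt)
    then have "(\<lambda>n. \<bar>(\<Sum>i<kk n. D i \<omega>) / real (kk n)\<bar>) \<longlonglongrightarrow> 0" by (simp only: real_sqrt_abs real_sqrt_zero)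
    then show "(\<lambda>n. (\<Sum>i<kk n. D i \<omega>) / real (kk n)) \<longlonglongrightarrow> 0"
      by (rule tendsto_rabs_zero_cancel)
  qed
  have mulim: "mu \<longlonglongrightarrow> expectation (Z 0)"
    unfolding mu_def
  proof (rule integral_dominated_convergence[where w="Z 0"])
    show "AE x in M. (\<lambda>i. g i (Z 0 x)) \<longlonglongrightarrow> Z 0 x"
    proof (intro AE_I2)
      fix x
      obtain N :: nat where "Z 0 x \<le> real N" using real_arch_simple by blast
      then have "eventually (\<lambda>i. g i (Z 0 x) = Z 0 x) sequentially"
        unfolding eventually_sequentially g_def by (intro exI[of _ N]) auto
      then show "(\<lambda>i. g i (Z 0 x)) \<longlonglongrightarrow> Z 0 x" by (rule tendsto_eventually)
    qed
    show "AE x in M. norm (g i (Z 0 x)) \<le> Z 0 x" for i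
      using nn by (intro AE_I2) (auto simp: g_def)
  qed (use int in auto)
  have ces: "(\<lambda>K. (\<Sum>i<K. mu i) / real K) \<longlonglongrightarrow> expectation (Z 0)" by (rule cesaro[OF mulim])
  note GF = geom_seq_facts[OF a, folded kk_def]
  have kklim: "filterlim kk at_top sequentially"
    unfolding filterlim_at_top
  proof
    fix Q
    obtain n0 where "Q < kk n0" using GF(3) by blast
    then show "eventually (\<lambda>n. Q \<le> kk n) sequentially"
      unfolding eventually_sequentially
    proof (intro exI allI impI)
      fix n assume "n0 \<le> n"
      then have "kk n0 \<le> kk n" by (rule GF(1))
      then show "Q \<le> kk n" using \<open>Q < kk n0\<close> by simp
    qed
  qed
  have ces2: "(\<lambda>n. (\<Sum>i<kk n. mu i) / real (kk n)) \<longlonglongrightarrow> expectation (Z 0)"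
    using filterlim_compose[OF ces kklim] by simp
  have rk: "filterlim (\<lambda>n. real (kk n)) at_infinity sequentially"
    by (rule filterlim_at_top_imp_at_infinity, rule filterlim_compose[OF filterlim_real_sequentially kklim])
  show ?thesis using AE1 trunc_ae[of Z, OF meas dist nn int]
  proof eventually_elim
    fix \<omega> assume h1: "(\<lambda>n. (\<Sum>i<kk n. D i \<omega>) / real (kk n)) \<longlonglongrightarrow> 0"
      and h2: "eventually (\<lambda>i. Z i \<omega> \<le> real (Suc i)) sequentially"
    obtain I where I: "\<And>i. i \<ge> I \<Longrightarrow> Z i \<omega> \<le> real (Suc i)" using h2 unfolding eventually_sequentially by auto
    define c where "c = (\<Sum>i<I. Z i \<omega> - g i (Z i \<omega>))"
    have eqK: "(\<Sum>i<K. Z i \<omega>) = (\<Sum>i<K. D i \<omega>) + (\<Sum>i<K. mu i) + c" if "K \<ge> I" for K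
    proof -
      have "(\<Sum>i<K. Z i \<omega> - g i (Z i \<omega>)) = c"
      proof -
        have "(\<Sum>i<K. Z i \<omega> - g i (Z i \<omega>)) = (\<Sum>i\<in>{..<K}-{..<I}. Z i \<omega> - g i (Z i \<omega>)) + (\<Sum>i<I. Z i \<omega> - g i (Z i \<omega>))"
          by (rule sum.subset_diff) (use that in auto)
        also have "(\<Sum>i\<in>{..<K}-{..<I}. Z i \<omega> - g i (Z i \<omega>)) = 0" using I by (intro sum.neutral) (auto simp: g_def)
        finally show ?thesis unfolding c_def by simp
      qed
      moreover have "(\<Sum>i<K. D i \<omega>) = (\<Sum>i<K. g i (Z i \<omega>)) - (\<Sum>i<K. mu i)"
        unfolding D_def by (rule sum_subtractf)
      moreover have "(\<Sum>i<K. Z i \<omega> - g i (Z i \<omega>)) = (\<Sum>i<K. Z i \<omega>) - (\<Sum>i<K. g i (Z i \<omega>))"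
        by (rule sum_subtractf)
      ultimately show ?thesis by linarith
    qed
    have lim: "(\<lambda>n. (\<Sum>i<kk n. D i \<omega>) / real (kk n) + (\<Sum>i<kk n. mu i) / real (kk n) + c / real (kk n)) \<longlonglongrightarrow> 0 + expectation (Z 0) + 0"
    proof -
      have l3: "(\<lambda>n. c / real (kk n)) \<longlonglongrightarrow> 0" by (rule tendsto_divide_0[OF tendsto_const rk])
      show ?thesis by (rule tendsto_add[OF tendsto_add[OF h1 ces2] l3])
    qed
    from kklim[unfolded filterlim_at_top] have evI: "eventually (\<lambda>n. I \<le> kk n) sequentially" by (rule spec)
    have ev: "eventually (\<lambda>n. (\<Sum>i<kk n. D i \<omega>) / real (kk n) + (\<Sum>i<kk n. mu i) / real (kk n) + c / real (kk n) = (\<Sum>i<kk n. Z i \<omega>) / real (kk n)) sequentially"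
      using evI
    proof eventually_elim
      case (elim n)
      show ?case using eqK[OF elim] by (simp add: add_divide_distrib)
    qed
    have "(\<lambda>n. (\<Sum>i<kk n. Z i \<omega>) / real (kk n)) \<longlonglongrightarrow> 0 + expectation (Z 0) + 0"
      by (rule Lim_transform_eventually[OF lim ev])
    then show "(\<lambda>n. (\<Sum>i<nat \<lfloor>\<alpha>^n\<rfloor>. Z i \<omega>) / real (nat \<lfloor>\<alpha>^n\<rfloor>)) \<longlonglongrightarrow> expectation (Z 0)"
      unfolding kk_def by (simp only: add_0_left add_0_right)
  qed
qed

end


primrec Wv :: "real \<Rightarrow> real \<Rightarrow> ('d::finite \<Rightarrow> 'n::finite \<Rightarrow> real) \<Rightarrow> ('n \<Rightarrow> real) \<Rightarrow> nat \<Rightarrow> 'd \<Rightarrow> real" where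
  "Wv \<eta> s X y 0 = (\<lambda>j. 0)"
| "Wv \<eta> s X y (Suc t) = (\<lambda>j. Wv \<eta> s X y t j + \<eta> * (\<Sum>m\<in>UNIV. (y m - s * (\<Sum>j'\<in>UNIV. Wv \<eta> s X y t j' * X j' m)) * X j m))"

lemma lin_net_upd:
  assumes "i < k"
  shows "lin_net k A (B(i := (B i)(j := s))) x = lin_net k A B x + (1/sqrt k) * A i * ((s - B i j) * x j)"
proof -
  have split: "\<And>F::nat \<Rightarrow> real. (\<Sum>i'<k. F i') = F i + (\<Sum>i'\<in>{..<k}-{i}. F i')"
    using assms by (subst sum.remove[of _ i]) auto
  have eq: "(\<Sum>i'\<in>{..<k}-{i}. A i' * (\<Sum>j'\<in>UNIV. (B(i := (B i)(j := s))) i' j' * x j'))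
          = (\<Sum>i'\<in>{..<k}-{i}. A i' * (\<Sum>j'\<in>UNIV. B i' j' * x j'))"
    by (rule sum.cong) auto
  have inner: "(\<Sum>j'\<in>UNIV. ((B i)(j := s)) j' * x j') = (\<Sum>j'\<in>UNIV. B i j' * x j') + (s - B i j) * x j"
  proof -
    have "(\<Sum>j'\<in>UNIV. ((B i)(j := s)) j' * x j') = s * x j + (\<Sum>j'\<in>UNIV-{j}. B i j' * x j')"
      by (subst sum.remove[of _ j]) (auto intro!: sum.cong)
    moreover have "(\<Sum>j'\<in>UNIV. B i j' * x j') = B i j * x j + (\<Sum>j'\<in>UNIV-{j}. B i j' * x j')"
      by (subst sum.remove[of _ j]) auto
    ultimately show ?thesis by (simp add: algebra_simps)
  qed
  have L: "(\<Sum>i'<k. A i' * (\<Sum>j'\<in>UNIV. (B(i := (B i)(j := s))) i' j' * x j')) = A i * (\<Sum>j'\<in>UNIV. ((B i)(j := s)) j' * x j') + (\<Sum>i'\<in>{..<k}-{i}. A i' * (\<Sum>j'\<in>UNIV. B i' j' * x j'))"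
    using split[of "\<lambda>i'. A i' * (\<Sum>j'\<in>UNIV. (B(i := (B i)(j := s))) i' j' * x j')"] eq by simp
  have R: "(\<Sum>i'<k. A i' * (\<Sum>j'\<in>UNIV. B i' j' * x j')) = A i * (\<Sum>j'\<in>UNIV. B i j' * x j') + (\<Sum>i'\<in>{..<k}-{i}. A i' * (\<Sum>j'\<in>UNIV. B i' j' * x j'))"
    by (rule split)
  show ?thesis
    unfolding lin_net_def L R inner by (simp add: algebra_simps)
qed

lemma loss_grad_eq:
  assumes "i < k"
  shows "loss_grad k A X y B i j = -(1/sqrt k) * A i * (\<Sum>m\<in>UNIV. (y m - lin_net k A B (\<lambda>j. X j m)) * X j m)"
proof -
  define c where "c m = y m - lin_net k A B (\<lambda>j. X j m)" for m
  define e where "e m = (1/sqrt k) * A i * X j m" for m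
  have inn: "y m - lin_net k A (B(i := (B i)(j := s))) (\<lambda>j. X j m) = c m - e m * (s - B i j)" for s m
    unfolding c_def e_def using assms by (simp add: lin_net_upd algebra_simps diff_divide_distrib add_divide_distrib)
  have f: "(\<lambda>s. sq_loss k A X y (B(i := (B i)(j := s)))) = (\<lambda>s. (1/2) * (\<Sum>m\<in>UNIV. (c m - e m * (s - B i j))^2))"
    unfolding sq_loss_def inn by simp
  have "((\<lambda>s. (1/2) * (\<Sum>m\<in>UNIV. (c m - e m * (s - B i j))^2)) has_real_derivative
        (1/2) * (\<Sum>m\<in>UNIV. 2 * (c m - e m * (B i j - B i j)) * (- e m))) (at (B i j))"
    by (auto intro!: derivative_eq_intros simp: algebra_simps)
  then have "deriv (\<lambda>s. sq_loss k A X y (B(i := (B i)(j := s)))) (B i j) = (1/2) * (\<Sum>m\<in>UNIV. 2 * (c m - e m * (B i j - B i j)) * (- e m))"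
    unfolding f by (rule DERIV_imp_deriv)
  also have "\<dots> = -(1/sqrt k) * A i * (\<Sum>m\<in>UNIV. c m * X j m)"
    by (simp add: e_def sum_distrib_left sum_negf algebra_simps)
  finally show ?thesis unfolding loss_grad_def c_def by simp
qed

lemma input_grad_eq:
  "input_grad (lin_net k A B) j = (1/sqrt k) * (\<Sum>i<k. A i * B i j)"
proof -
  have d: "(\<Sum>j'\<in>UNIV. B i j' * (if j' = j then s else 0)) = B i j * s" for i s
  proof -
    have "(\<Sum>j'\<in>UNIV. B i j' * (if j' = j then s else 0)) = (\<Sum>j'\<in>UNIV. if j' = j then B i j' * s else 0)"
      by (rule sum.cong) auto
    then show ?thesis by simp
  qed
  have "\<And>s. lin_net k A B (\<lambda>j'. if j' = j then s else 0) = s * ((1/sqrt k) * (\<Sum>i<k. A i * B i j))"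
    unfolding lin_net_def d by (simp add: sum_distrib_left algebra_simps)
  then have F: "(\<lambda>s. lin_net k A B (\<lambda>j'. if j' = j then s else 0)) = (\<lambda>s. s * ((1/sqrt k) * (\<Sum>i<k. A i * B i j)))"
    by auto
  have D: "deriv (\<lambda>s::real. s * c) 0 = c" for c
    by (rule DERIV_imp_deriv) (auto intro!: derivative_eq_intros)
  show ?thesis unfolding input_grad_def F by (rule D)
qed

lemma lin_net_form:
  assumes "k > 0" "\<And>i j. i < k \<Longrightarrow> B i j = A i / sqrt k * w j"
  shows "lin_net k A B x = ((\<Sum>i<k. (A i)^2) / k) * (\<Sum>j\<in>UNIV. w j * x j)"
proof -
  define r where "r = sqrt k"
  have r: "r > 0" "real k = r * r" using assms(1) by (auto simp: r_def)
  have "lin_net k A B x = (\<Sum>i<k. A i * (\<Sum>j\<in>UNIV. A i * (w j * x j)) / (r * r))"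
    unfolding lin_net_def using assms(2) r
    by (auto intro!: sum.cong simp: sum_distrib_left sum_divide_distrib r_def[symmetric] algebra_simps)
  also have "\<dots> = (\<Sum>i<k. (A i)^2 * (\<Sum>j\<in>UNIV. w j * x j) / (r * r))"
    by (auto intro!: sum.cong simp: sum_distrib_left power2_eq_square algebra_simps)
  finally show ?thesis using r by (simp add: sum_distrib_right sum_divide_distrib)
qed

lemma gd_form:
  assumes "k > 0" "i < k"
  shows "gd_iter \<eta> k A X y t i j = A i / sqrt k * Wv \<eta> ((\<Sum>i<k. (A i)^2) / k) X y t j"
  using assms(2)
proof (induction t arbitrary: i j)
  case 0
  then show ?case by simp
next
  case (Suc t)
  define s where "s = (\<Sum>i<k. (A i)^2) / k"
  have ln: "lin_net k A (gd_iter \<eta> k A X y t) x = s * (\<Sum>j\<in>UNIV. Wv \<eta> s X y t j * x j)" for x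
    unfolding s_def by (rule lin_net_form[OF assms(1)]) (use Suc.IH in auto)
  show ?case
    using Suc.prems
    by (simp add: loss_grad_eq Suc.IH ln s_def[symmetric] algebra_simps)
qed

lemma gram_form:
  assumes "k > 0" "\<And>i j. i < k \<Longrightarrow> B i j = A i / sqrt k * w j"
  shows "gram k B j j' = ((\<Sum>i<k. (A i)^2) / k) * (w j * w j')"
proof -
  have "gram k B j j' = (\<Sum>i<k. (A i)^2 / (sqrt k * sqrt k) * (w j * w j'))"
    unfolding gram_def using assms(2) by (auto intro!: sum.cong simp: power2_eq_square)
  also have "sqrt k * sqrt k = real k" using assms(1) by simp
  finally show ?thesis by (simp add: sum_distrib_right sum_divide_distrib)
qed

lemma ig_form:
  assumes "k > 0" "\<And>i j. i < k \<Longrightarrow> B i j = A i / sqrt k * w j"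
  shows "input_grad (lin_net k A B) j = ((\<Sum>i<k. (A i)^2) / k) * w j"
proof -
  have "input_grad (lin_net k A B) j = (1/sqrt k) * (\<Sum>i<k. (A i)^2 / sqrt k * w j)"
    unfolding input_grad_eq using assms(2) by (auto intro!: sum.cong simp: power2_eq_square)
  also have "\<dots> = (1/(sqrt k * sqrt k)) * (\<Sum>i<k. (A i)^2) * w j"
    by (simp add: sum_distrib_right sum_divide_distrib)
  also have "sqrt k * sqrt k = real k" using assms(1) by simp
  finally show ?thesis by simp
qed

lemma Wv_cont: "isCont (\<lambda>s. Wv \<eta> s X y t j) s0"
proof (induction t arbitrary: j)
  case 0 then show ?case by simp
next
  case (Suc t) show ?case unfolding Wv.simps by (intro continuous_intros Suc.IH)
qed



context prob_space
begin

lemma slln: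
  fixes Z :: "nat \<Rightarrow> 'a \<Rightarrow> real"
  assumes ind: "indep_vars (\<lambda>_. borel) Z UNIV"
    and dist: "\<And>i. distr M borel (Z i) = distr M borel (Z 0)"
    and nn: "\<And>i \<omega>. 0 \<le> Z i \<omega>" and int: "integrable M (Z 0)"
  shows "AE \<omega> in M. (\<lambda>k. (\<Sum>i<k. Z i \<omega>) / real k) \<longlonglongrightarrow> expectation (Z 0)"
proof -
  define \<alpha> where "\<alpha> m = 1 + 1 / real (Suc m)" for m
  have a1: "\<alpha> m > 1" for m by (simp add: \<alpha>_def)
  have alim: "\<alpha> \<longlonglongrightarrow> 1"
  proof -
    have "(\<lambda>m. 1 + inverse (real (Suc m))) \<longlonglongrightarrow> 1 + 0"
      by (rule tendsto_add[OF tendsto_const LIMSEQ_inverse_real_of_nat])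
    then show ?thesis unfolding \<alpha>_def by (simp add: inverse_eq_divide)
  qed
  have "AE \<omega> in M. \<forall>m. (\<lambda>n. (\<Sum>i<nat \<lfloor>\<alpha> m ^ n\<rfloor>. Z i \<omega>) / real (nat \<lfloor>\<alpha> m ^ n\<rfloor>)) \<longlonglongrightarrow> expectation (Z 0)"
    unfolding AE_all_countable by (intro allI subseq_conv[OF ind dist nn int a1])
  then show ?thesis
  proof eventually_elim
    fix \<omega> assume H: "\<forall>m. (\<lambda>n. (\<Sum>i<nat \<lfloor>\<alpha> m ^ n\<rfloor>. Z i \<omega>) / real (nat \<lfloor>\<alpha> m ^ n\<rfloor>)) \<longlonglongrightarrow> expectation (Z 0)"
    show "(\<lambda>k. (\<Sum>i<k. Z i \<omega>) / real k) \<longlonglongrightarrow> expectation (Z 0)"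
    proof (rule interp[where S="\<lambda>k. \<Sum>i<k. Z i \<omega>" and \<alpha>=\<alpha>])
      show "(\<Sum>i<a. Z i \<omega>) \<le> (\<Sum>i<b. Z i \<omega>)" if "a \<le> b" for a b
        using that nn by (intro sum_mono2) auto
      show "0 \<le> (\<Sum>i<k. Z i \<omega>)" for k using nn by (intro sum_nonneg) auto
    qed (use a1 alim H in auto)
  qed
qed

end

lemma gd_lim:
  fixes s :: "nat \<Rightarrow> real"
  assumes "s \<longlonglongrightarrow> 1"
  shows "(\<lambda>k. s k * (Wv \<eta> (s k) X y t j * Wv \<eta> (s k) X y t j')) \<longlonglongrightarrow> Wv \<eta> 1 X y t j * Wv \<eta> 1 X y t j'"
    and "(\<lambda>k. (s k * Wv \<eta> (s k) X y t j) * (s k * Wv \<eta> (s k) X y t j')) \<longlonglongrightarrow> Wv \<eta> 1 X y t j * Wv \<eta> 1 X y t j'"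
proof -
  have w: "(\<lambda>k. Wv \<eta> (s k) X y t i) \<longlonglongrightarrow> Wv \<eta> 1 X y t i" for i
    by (rule isCont_tendsto_compose[OF Wv_cont assms])
  show "(\<lambda>k. s k * (Wv \<eta> (s k) X y t j * Wv \<eta> (s k) X y t j')) \<longlonglongrightarrow> Wv \<eta> 1 X y t j * Wv \<eta> 1 X y t j'"
    using tendsto_mult[OF assms tendsto_mult[OF w w]] by simp
  show "(\<lambda>k. (s k * Wv \<eta> (s k) X y t j) * (s k * Wv \<eta> (s k) X y t j')) \<longlonglongrightarrow> Wv \<eta> 1 X y t j * Wv \<eta> 1 X y t j'"
    using tendsto_mult[OF tendsto_mult[OF assms w] tendsto_mult[OF assms w]] by simp
qed

theorem proposition3:
  fixes M :: "'a measure" and A :: "nat \<Rightarrow> 'a \<Rightarrow> real"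
    and X :: "'d::finite \<Rightarrow> 'n::finite \<Rightarrow> real" and y :: "'n \<Rightarrow> real"
    and \<eta> :: real and t :: nat
  assumes "prob_space M"
    and "\<eta> > 0"
    and "prob_space.indep_vars M (\<lambda>_. borel) A UNIV"
    and "\<forall>i. distr M borel (A i) = distr M borel (A 0)"
    and "integrable M (\<lambda>\<omega>. (A 0 \<omega>)^2)"
    and "(\<integral>\<omega>. (A 0 \<omega>)^2 \<partial>M) = 1"
  shows "AE \<omega> in M. \<exists>L :: 'd \<Rightarrow> 'd \<Rightarrow> real. \<forall>j j'.
           (\<lambda>k. gram k (gd_iter \<eta> k (\<lambda>i. A i \<omega>) X y t) j j') \<longlonglongrightarrow> L j j'
         \<and> (\<lambda>k. input_grad (lin_net k (\<lambda>i. A i \<omega>) (gd_iter \<eta> k (\<lambda>i. A i \<omega>) X y t)) j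
               * input_grad (lin_net k (\<lambda>i. A i \<omega>) (gd_iter \<eta> k (\<lambda>i. A i \<omega>) X y t)) j')
             \<longlonglongrightarrow> L j j'"
proof -
  interpret prob_space M by (rule assms(1))
  define Z where "Z i \<omega> = (A i \<omega>)^2" for i \<omega>
  have Am[measurable]: "A i \<in> borel_measurable M" for i by (rule rv_of_indep[OF assms(3)])
  have indZ: "indep_vars (\<lambda>_. borel) Z UNIV"
    using indep_vars_compose2[OF assms(3), of "\<lambda>i x. x^2" "\<lambda>_. borel"] unfolding Z_def[abs_def] by simp
  have distZ: "distr M borel (Z i) = distr M borel (Z 0)" for i
  proof -
    have "distr M borel (Z i) = distr (distr M borel (A i)) borel (\<lambda>x. x^2)"
      unfolding Z_def[abs_def] by (subst distr_distr) (auto simp: comp_def)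
    also have "\<dots> = distr (distr M borel (A 0)) borel (\<lambda>x. x^2)" by (subst assms(4)[rule_format, of i]) (rule refl)
    also have "\<dots> = distr M borel (Z 0)"
      unfolding Z_def[abs_def] by (subst distr_distr) (auto simp: comp_def)
    finally show ?thesis .
  qed
  have "AE \<omega> in M. (\<lambda>k. (\<Sum>i<k. Z i \<omega>) / real k) \<longlonglongrightarrow> expectation (Z 0)"
    by (rule slln[OF indZ distZ]) (use assms(5) in \<open>auto simp: Z_def[abs_def]\<close>)
  moreover have "expectation (Z 0) = 1" using assms(6) by (simp add: Z_def[abs_def])
  ultimately have AEs: "AE \<omega> in M. (\<lambda>k. (\<Sum>i<k. (A i \<omega>)^2) / real k) \<longlonglongrightarrow> 1"
    by (simp add: Z_def)
  then show ?thesis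
  proof eventually_elim
    fix \<omega> assume hs: "(\<lambda>k. (\<Sum>i<k. (A i \<omega>)^2) / real k) \<longlonglongrightarrow> 1"
    define s where "s k = (\<Sum>i<k. (A i \<omega>)^2) / real k" for k
    have hs': "s \<longlonglongrightarrow> 1" using hs unfolding s_def .
    have B: "\<And>i j. i < k \<Longrightarrow> gd_iter \<eta> k (\<lambda>i. A i \<omega>) X y t i j = A i \<omega> / sqrt k * Wv \<eta> (s k) X y t j" if "k > 0" for k
      unfolding s_def by (rule gd_form[OF that])
    have G: "gram k (gd_iter \<eta> k (\<lambda>i. A i \<omega>) X y t) j j' = s k * (Wv \<eta> (s k) X y t j * Wv \<eta> (s k) X y t j')"
      if "k > 0" for k j j'
      unfolding s_def by (rule gram_form[OF that]) (use B[OF that] in \<open>simp add: s_def\<close>)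
    have IG: "input_grad (lin_net k (\<lambda>i. A i \<omega>) (gd_iter \<eta> k (\<lambda>i. A i \<omega>) X y t)) j = s k * Wv \<eta> (s k) X y t j"
      if "k > 0" for k j
      unfolding s_def by (rule ig_form[OF that]) (use B[OF that] in \<open>simp add: s_def\<close>)
    show "\<exists>L :: 'd \<Rightarrow> 'd \<Rightarrow> real. \<forall>j j'.
           (\<lambda>k. gram k (gd_iter \<eta> k (\<lambda>i. A i \<omega>) X y t) j j') \<longlonglongrightarrow> L j j'
         \<and> (\<lambda>k. input_grad (lin_net k (\<lambda>i. A i \<omega>) (gd_iter \<eta> k (\<lambda>i. A i \<omega>) X y t)) j
               * input_grad (lin_net k (\<lambda>i. A i \<omega>) (gd_iter \<eta> k (\<lambda>i. A i \<omega>) X y t)) j')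
             \<longlonglongrightarrow> L j j'"
    proof (intro exI[of _ "\<lambda>j j'. Wv \<eta> 1 X y t j * Wv \<eta> 1 X y t j'"] allI conjI)
      fix j j' :: 'd
      have ev: "eventually (\<lambda>k. k > (0::nat)) sequentially" by (rule eventually_gt_at_top)
      show "(\<lambda>k. gram k (gd_iter \<eta> k (\<lambda>i. A i \<omega>) X y t) j j') \<longlonglongrightarrow> Wv \<eta> 1 X y t j * Wv \<eta> 1 X y t j'"
      proof (rule Lim_transform_eventually[OF gd_lim(1)[OF hs']])
        show "eventually (\<lambda>k. s k * (Wv \<eta> (s k) X y t j * Wv \<eta> (s k) X y t j') = gram k (gd_iter \<eta> k (\<lambda>i. A i \<omega>) X y t) j j') sequentially"
          using ev by eventually_elim (simp add: G)
      qed
      show "(\<lambda>k. input_grad (lin_net k (\<lambda>i. A i \<omega>) (gd_iter \<eta> k (\<lambda>i. A i \<omega>) X y t)) j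
               * input_grad (lin_net k (\<lambda>i. A i \<omega>) (gd_iter \<eta> k (\<lambda>i. A i \<omega>) X y t)) j') \<longlonglongrightarrow> Wv \<eta> 1 X y t j * Wv \<eta> 1 X y t j'"
      proof (rule Lim_transform_eventually[OF gd_lim(2)[OF hs']])
        show "eventually (\<lambda>k. (s k * Wv \<eta> (s k) X y t j) * (s k * Wv \<eta> (s k) X y t j') = input_grad (lin_net k (\<lambda>i. A i \<omega>) (gd_iter \<eta> k (\<lambda>i. A i \<omega>) X y t)) j
               * input_grad (lin_net k (\<lambda>i. A i \<omega>) (gd_iter \<eta> k (\<lambda>i. A i \<omega>) X y t)) j') sequentially"
          using ev by eventually_elim (simp add: IG)
      qed
    qed
  qed
qed


end
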